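(* Let $X$ be a finite set and $\Phi=\{\phi_x\}_{x\in X}$ a frame for a finite-dimensional Hilbert space $\mathcal{H}$ (i.e. a spanning family), with Gram matrix $\mathcal{G}=[\langle\phi_y,\phi_x\rangle]_{x,y\in X}$. For a permutation $\sigma$ of $X$ let $P_\sigma=[\delta_{x,\sigma y}]_{x,y\in X}$, and let $G(\Phi)=\{\sigma\in S(X): P_\sigma\mathcal{G}=\mathcal{G}P_\sigma\}$. Fix $x_0\in X$ and let $H(\Phi)$ be the stabilizer of $x_0$ in $G(\Phi)$. Then: (i) $\Phi$ is a homogeneous frame if and only if $G(\Phi)$ acts transitively on $X$; in that case $\Phi$ is a $(G(\Phi),H(\Phi))$-frame, with respect to the identification $\sigma H(\Phi)\leftrightarrow \sigma x_0$ of $G(\Phi)/H(\Phi)$ with $X$. (ii) If $\Phi$ is a $(G,H)$-frame for some Gelfand pair $(G,H)$, then $(G(\Phi),H(\Phi))$ is also a Gelfand pair.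
   Context: Given a finite group $G$ and subgroup $H$, we say $\Phi=\{\phi_x\}_{x\in X}$ is a $(G,H)$-frame if there are a bijection $\beta\colon X\to G/H$, a unitary representation $\rho\colon G\to U(\mathcal{H})$ and a vector $v\in\mathcal{H}$ with $\rho(h)v=v$ for all $h\in H$, such that $\phi_x=\rho(g)v$ whenever $\beta(x)=gH$. $\Phi$ is homogeneous if it is a $(G,H)$-frame for some finite group $G$ and subgroup $H$. For a finite group $G$ and subgroup $H$, $(G,H)$ is a Gelfand pair if the algebra of complex $G/H\times G/H$ matrices $M$ satisfying $M_{g x,g y}=M_{x,y}$ for all $g\in G$, $x,y\in G/H$ (left multiplication action) is commutative. *)

theory Defs
  imports "HOL-Analysis.Analysis" "HOL-Algebra.Coset" "HOL-Combinatorics.Permutations"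
begin

text \<open>The finite-dimensional complex Hilbert space is modelled as complex^'n with the
standard inner product, linear in the first argument.\<close>

definition cinner :: "complex^'n \<Rightarrow> complex^'n \<Rightarrow> complex" where
  "cinner u v = (\<Sum>i\<in>UNIV. u$i * cnj (v$i))"

definition is_frame :: "'x set \<Rightarrow> ('x \<Rightarrow> complex^'n) \<Rightarrow> bool" where
  "is_frame X \<Phi> \<longleftrightarrow> finite X \<and> (\<forall>w. \<exists>c. w = (\<Sum>x\<in>X. c x *s \<Phi> x))"

definition unitary_mat :: "complex^'n^'n \<Rightarrow> bool" where
  "unitary_mat U \<longleftrightarrow> (\<forall>u v. cinner (U *v u) (U *v v) = cinner u v) \<and> surj (\<lambda>u. U *v u)"

definition unitary_rep :: "('g, 'b) monoid_scheme \<Rightarrow> ('g \<Rightarrow> complex^'n^'n) \<Rightarrow> bool" where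
  "unitary_rep G \<rho> \<longleftrightarrow> (\<forall>g\<in>carrier G. unitary_mat (\<rho> g)) \<and>
     (\<forall>g\<in>carrier G. \<forall>h\<in>carrier G. \<rho> (g \<otimes>\<^bsub>G\<^esub> h) = \<rho> g ** \<rho> h)"

definition lcosets :: "('g, 'b) monoid_scheme \<Rightarrow> 'g set \<Rightarrow> 'g set set" where
  "lcosets G H = {g <#\<^bsub>G\<^esub> H | g. g \<in> carrier G}"

definition GH_frame_via ::
  "('g, 'b) monoid_scheme \<Rightarrow> 'g set \<Rightarrow> 'x set \<Rightarrow> ('x \<Rightarrow> complex^'n) \<Rightarrow> ('x \<Rightarrow> 'g set) \<Rightarrow> bool" where
  "GH_frame_via G H X \<Phi> \<beta> \<longleftrightarrow>
     group G \<and> finite (carrier G) \<and> subgroup H G \<and>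
     bij_betw \<beta> X (lcosets G H) \<and>
     (\<exists>\<rho> v. unitary_rep G \<rho> \<and> (\<forall>h\<in>H. \<rho> h *v v = v) \<and>
        (\<forall>x\<in>X. \<forall>g\<in>carrier G. \<beta> x = g <#\<^bsub>G\<^esub> H \<longrightarrow> \<Phi> x = \<rho> g *v v))"

definition GH_frame ::
  "('g, 'b) monoid_scheme \<Rightarrow> 'g set \<Rightarrow> 'x set \<Rightarrow> ('x \<Rightarrow> complex^'n) \<Rightarrow> bool" where
  "GH_frame G H X \<Phi> \<longleftrightarrow> (\<exists>\<beta>. GH_frame_via G H X \<Phi> \<beta>)"

text \<open>Homogeneous: a (G,H)-frame for some finite group G. Since every finite group is
isomorphic to one whose elements are natural numbers, groups are taken with carrier in nat.\<close>
definition homogeneous_frame :: "'x set \<Rightarrow> ('x \<Rightarrow> complex^'n) \<Rightarrow> bool" where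
  "homogeneous_frame X \<Phi> \<longleftrightarrow> (\<exists>(G::nat monoid) H. GH_frame G H X \<Phi>)"

definition gelfand_pair :: "('g, 'b) monoid_scheme \<Rightarrow> 'g set \<Rightarrow> bool" where
  "gelfand_pair G H \<longleftrightarrow>
     (\<forall>M N :: 'g set \<Rightarrow> 'g set \<Rightarrow> complex.
        (\<forall>g\<in>carrier G. \<forall>a\<in>lcosets G H. \<forall>b\<in>lcosets G H.
            M (g <#\<^bsub>G\<^esub> a) (g <#\<^bsub>G\<^esub> b) = M a b \<and> N (g <#\<^bsub>G\<^esub> a) (g <#\<^bsub>G\<^esub> b) = N a b)
        \<longrightarrow> (\<forall>a\<in>lcosets G H. \<forall>b\<in>lcosets G H.
              (\<Sum>c\<in>lcosets G H. M a c * N c b) = (\<Sum>c\<in>lcosets G H. N a c * M c b)))"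

definition gram :: "('x \<Rightarrow> complex^'n) \<Rightarrow> 'x \<Rightarrow> 'x \<Rightarrow> complex" where
  "gram \<Phi> x y = cinner (\<Phi> y) (\<Phi> x)"

definition perm_mat :: "('x \<Rightarrow> 'x) \<Rightarrow> 'x \<Rightarrow> 'x \<Rightarrow> complex" where
  "perm_mat \<sigma> x y = (if x = \<sigma> y then 1 else 0)"

definition sym_group_frame :: "'x set \<Rightarrow> ('x \<Rightarrow> complex^'n) \<Rightarrow> ('x \<Rightarrow> 'x) monoid" where
  "sym_group_frame X \<Phi> =
    \<lparr>carrier = {\<sigma>. \<sigma> permutes X \<and>
        (\<forall>x\<in>X. \<forall>y\<in>X. (\<Sum>z\<in>X. perm_mat \<sigma> x z * gram \<Phi> z y) = (\<Sum>z\<in>X. gram \<Phi> x z * perm_mat \<sigma> z y))},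
     mult = (\<circ>), one = id\<rparr>"

definition stab_frame :: "'x set \<Rightarrow> ('x \<Rightarrow> complex^'n) \<Rightarrow> 'x \<Rightarrow> ('x \<Rightarrow> 'x) set" where
  "stab_frame X \<Phi> x0 = {\<sigma> \<in> carrier (sym_group_frame X \<Phi>). \<sigma> x0 = x0}"

end

theory Submission
  imports Defs
begin


abbreviation iv :: "('a \<Rightarrow> 'b) \<Rightarrow> 'b \<Rightarrow> 'a" where "iv \<equiv> Hilbert_Choice.inv"
abbreviation "S X \<Phi> \<equiv> sym_group_frame X \<Phi>"

lemma mult_S[simp]: "mult (S X \<Phi>) = (\<circ>)" and one_S[simp]: "one (S X \<Phi>) = id"
  by (simp_all add: sym_group_frame_def)

context fixes X :: "'x set" and \<Phi> :: "'x \<Rightarrow> complex^'n" assumes fin: "finite X"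
begin

lemma carrier_S: "carrier (S X \<Phi>) =
   {\<sigma>. \<sigma> permutes X \<and> (\<forall>x\<in>X. \<forall>y\<in>X. gram \<Phi> (\<sigma> x) (\<sigma> y) = gram \<Phi> x y)}"
proof -
  have "(\<forall>x\<in>X. \<forall>y\<in>X. (\<Sum>z\<in>X. perm_mat \<sigma> x z * gram \<Phi> z y) = (\<Sum>z\<in>X. gram \<Phi> x z * perm_mat \<sigma> z y))
     \<longleftrightarrow> (\<forall>x\<in>X. \<forall>y\<in>X. gram \<Phi> (\<sigma> x) (\<sigma> y) = gram \<Phi> x y)" if p: "\<sigma> permutes X" for \<sigma>
  proof -
    have s1: "(\<Sum>z\<in>X. perm_mat \<sigma> x z * gram \<Phi> z y) = gram \<Phi> (iv \<sigma> x) y" if "x \<in> X" for x y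
    proof -
      have "(\<Sum>z\<in>X. perm_mat \<sigma> x z * gram \<Phi> z y) = (\<Sum>z\<in>X. if z = iv \<sigma> x then gram \<Phi> z y else 0)"
        apply (rule sum.cong, simp)
        unfolding perm_mat_def using permutes_inverses[OF p] by auto
      also have "\<dots> = gram \<Phi> (iv \<sigma> x) y"
      proof -
        have "iv \<sigma> x \<in> X" using that permutes_in_image[OF permutes_inv[OF p]] by simp
        then show ?thesis using sum.delta[OF fin, of "iv \<sigma> x" "\<lambda>z. gram \<Phi> z y"] sum.delta'[OF fin, of "iv \<sigma> x" "\<lambda>z. gram \<Phi> z y"] by (auto simp: eq_commute)
      qed
      finally show ?thesis .
    qed
    have s2: "(\<Sum>z\<in>X. gram \<Phi> x z * perm_mat \<sigma> z y) = gram \<Phi> x (\<sigma> y)" if "y \<in> X" for x y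
    proof -
      have "(\<Sum>z\<in>X. gram \<Phi> x z * perm_mat \<sigma> z y) = (\<Sum>z\<in>X. if z = \<sigma> y then gram \<Phi> x z else 0)"
        by (rule sum.cong, simp_all add: perm_mat_def)
      also have "\<dots> = gram \<Phi> x (\<sigma> y)"
        using that permutes_in_image[OF p] fin by (simp add: sum.delta)
      finally show ?thesis .
    qed
    show ?thesis
    proof
      assume A: "\<forall>x\<in>X. \<forall>y\<in>X. (\<Sum>z\<in>X. perm_mat \<sigma> x z * gram \<Phi> z y) = (\<Sum>z\<in>X. gram \<Phi> x z * perm_mat \<sigma> z y)"
      show "\<forall>x\<in>X. \<forall>y\<in>X. gram \<Phi> (\<sigma> x) (\<sigma> y) = gram \<Phi> x y"
      proof (intro ballI)
        fix x y assume xy: "x \<in> X" "y \<in> X"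
        have "\<sigma> x \<in> X" using xy permutes_in_image[OF p] by simp
        from A[rule_format, OF this xy(2)] show "gram \<Phi> (\<sigma> x) (\<sigma> y) = gram \<Phi> x y"
          using s1[OF \<open>\<sigma> x \<in> X\<close>] s2[OF xy(2)] permutes_inverses[OF p] by simp
      qed
    next
      assume A: "\<forall>x\<in>X. \<forall>y\<in>X. gram \<Phi> (\<sigma> x) (\<sigma> y) = gram \<Phi> x y"
      show "\<forall>x\<in>X. \<forall>y\<in>X. (\<Sum>z\<in>X. perm_mat \<sigma> x z * gram \<Phi> z y) = (\<Sum>z\<in>X. gram \<Phi> x z * perm_mat \<sigma> z y)"
      proof (intro ballI)
        fix x y assume xy: "x \<in> X" "y \<in> X"
        have "iv \<sigma> x \<in> X" using xy permutes_in_image[OF permutes_inv[OF p]] by simp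
        from A[rule_format, OF this xy(2)] show "(\<Sum>z\<in>X. perm_mat \<sigma> x z * gram \<Phi> z y) = (\<Sum>z\<in>X. gram \<Phi> x z * perm_mat \<sigma> z y)"
          using s1[OF xy(1)] s2[OF xy(2)] permutes_inverses[OF p] by simp
      qed
    qed
  qed
  then show ?thesis unfolding sym_group_frame_def by auto
qed

lemma S_inv_closed: assumes "\<sigma> \<in> carrier (S X \<Phi>)" shows "iv \<sigma> \<in> carrier (S X \<Phi>)"
proof -
  have p: "\<sigma> permutes X" and g: "\<forall>x\<in>X. \<forall>y\<in>X. gram \<Phi> (\<sigma> x) (\<sigma> y) = gram \<Phi> x y"
    using assms by (auto simp: carrier_S fin)
  have "gram \<Phi> (iv \<sigma> x) (iv \<sigma> y) = gram \<Phi> x y" if "x \<in> X" "y \<in> X" for x y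
    using g[rule_format, of "iv \<sigma> x" "iv \<sigma> y"] that permutes_in_image[OF permutes_inv[OF p]]
      permutes_inverses[OF p] by simp
  then show ?thesis using permutes_inv[OF p] by (auto simp: carrier_S fin)
qed

lemma S_comp_closed: assumes "\<sigma> \<in> carrier (S X \<Phi>)" "\<tau> \<in> carrier (S X \<Phi>)" shows "\<sigma> \<circ> \<tau> \<in> carrier (S X \<Phi>)"
proof -
  have p: "\<sigma> permutes X" "\<tau> permutes X" and g: "\<forall>x\<in>X. \<forall>y\<in>X. gram \<Phi> (\<sigma> x) (\<sigma> y) = gram \<Phi> x y"
     "\<forall>x\<in>X. \<forall>y\<in>X. gram \<Phi> (\<tau> x) (\<tau> y) = gram \<Phi> x y"
    using assms by (auto simp: carrier_S fin)
  have "(\<sigma> \<circ> \<tau>) permutes X" using p by (rule permutes_compose[rotated])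
  moreover have "gram \<Phi> ((\<sigma> \<circ> \<tau>) x) ((\<sigma> \<circ> \<tau>) y) = gram \<Phi> x y" if "x \<in> X" "y \<in> X" for x y
  proof -
    have "\<tau> x \<in> X" "\<tau> y \<in> X" using that permutes_in_image[OF p(2)] by auto
    then show ?thesis using g(1)[rule_format, OF \<open>\<tau> x \<in> X\<close> \<open>\<tau> y \<in> X\<close>] g(2)[rule_format, OF that] by simp
  qed
  ultimately show ?thesis by (auto simp: carrier_S fin)
qed

lemma id_S: "id \<in> carrier (S X \<Phi>)"
  by (simp add: carrier_S permutes_id)

lemma group_S: "group (S X \<Phi>)"
proof (rule groupI)
  fix x assume x: "x \<in> carrier (S X \<Phi>)"
  show "\<exists>y\<in>carrier (S X \<Phi>). y \<otimes>\<^bsub>S X \<Phi>\<^esub> x = \<one>\<^bsub>S X \<Phi>\<^esub>"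
  proof
    have "x permutes X" using x by (simp add: carrier_S)
    then show "iv x \<otimes>\<^bsub>S X \<Phi>\<^esub> x = \<one>\<^bsub>S X \<Phi>\<^esub>" by (simp add: permutes_inv_o(2))
  qed (rule S_inv_closed[OF x])
qed (auto simp: S_comp_closed id_S comp_assoc)

lemma finite_S: "finite (carrier (S X \<Phi>))"
  by (rule finite_subset[OF _ finite_permutations[of X]]) (auto simp: carrier_S fin)

lemma inv_S: assumes s: "\<sigma> \<in> carrier (S X \<Phi>)" shows "inv\<^bsub>S X \<Phi>\<^esub> \<sigma> = iv \<sigma>"
proof (rule group.inv_equality[OF group_S])
  have "\<sigma> permutes X" using s by (simp add: carrier_S)
  then show "iv \<sigma> \<otimes>\<^bsub>S X \<Phi>\<^esub> \<sigma> = \<one>\<^bsub>S X \<Phi>\<^esub>" by (simp add: permutes_inv_o(2))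
qed (use s S_inv_closed[OF s] in auto)

lemma stab_sub: "stab_frame X \<Phi> x0 \<subseteq> carrier (S X \<Phi>)"
  unfolding stab_frame_def by auto

lemma subgroup_stab: "subgroup (stab_frame X \<Phi> x0) (S X \<Phi>)"
proof (rule group.subgroupI[OF group_S])
  show "stab_frame X \<Phi> x0 \<noteq> {}" using id_S unfolding stab_frame_def by force
next
  fix a assume a: "a \<in> stab_frame X \<Phi> x0"
  then have "a \<in> carrier (S X \<Phi>)" "a x0 = x0" unfolding stab_frame_def by auto
  moreover have "iv a x0 = x0" using calculation carrier_S permutes_inverses
    by (metis (no_types, lifting) mem_Collect_eq)
  ultimately show "inv\<^bsub>S X \<Phi>\<^esub> a \<in> stab_frame X \<Phi> x0"
    by (simp add: inv_S S_inv_closed stab_frame_def)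
next
  fix a b assume "a \<in> stab_frame X \<Phi> x0" "b \<in> stab_frame X \<Phi> x0"
  then show "a \<otimes>\<^bsub>S X \<Phi>\<^esub> b \<in> stab_frame X \<Phi> x0" by (auto simp: stab_frame_def S_comp_closed)
qed (rule stab_sub)

lemma lcos_S: "\<sigma> <#\<^bsub>S X \<Phi>\<^esub> K = (\<lambda>h. \<sigma> \<circ> h) ` K"
  unfolding l_coset_def by auto

lemma coset_eq_S:
  assumes "\<sigma> \<in> carrier (S X \<Phi>)" "\<tau> \<in> carrier (S X \<Phi>)"
  shows "\<sigma> <#\<^bsub>S X \<Phi>\<^esub> stab_frame X \<Phi> x0 = \<tau> <#\<^bsub>S X \<Phi>\<^esub> stab_frame X \<Phi> x0 \<longleftrightarrow> \<sigma> x0 = \<tau> x0"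
proof
  assume "\<sigma> <#\<^bsub>S X \<Phi>\<^esub> stab_frame X \<Phi> x0 = \<tau> <#\<^bsub>S X \<Phi>\<^esub> stab_frame X \<Phi> x0"
  moreover have "id \<in> stab_frame X \<Phi> x0" using id_S by (simp add: stab_frame_def)
  ultimately have "\<sigma> \<in> (\<lambda>h. \<tau> \<circ> h) ` stab_frame X \<Phi> x0" by (metis lcos_S image_eqI comp_id)
  then show "\<sigma> x0 = \<tau> x0" by (auto simp: stab_frame_def)
next
  assume e: "\<sigma> x0 = \<tau> x0"
  have sub: "a <#\<^bsub>S X \<Phi>\<^esub> stab_frame X \<Phi> x0 \<subseteq> b <#\<^bsub>S X \<Phi>\<^esub> stab_frame X \<Phi> x0"
    if a: "a \<in> carrier (S X \<Phi>)" and b: "b \<in> carrier (S X \<Phi>)" and ab: "a x0 = b x0" for a b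
  proof
    fix f assume "f \<in> a <#\<^bsub>S X \<Phi>\<^esub> stab_frame X \<Phi> x0"
    then obtain h where h: "h \<in> stab_frame X \<Phi> x0" "f = a \<circ> h" by (auto simp: lcos_S)
    have bp: "b permutes X" using b by (simp add: carrier_S)
    define k where "k = iv b \<circ> a \<circ> h"
    have "k \<in> carrier (S X \<Phi>)" unfolding k_def using h a b
      by (intro S_comp_closed S_inv_closed) (auto simp: stab_frame_def)
    moreover have "k x0 = x0" using h ab permutes_inverses[OF bp] by (auto simp: k_def stab_frame_def)
    ultimately have "k \<in> stab_frame X \<Phi> x0" by (simp add: stab_frame_def)
    moreover have "f = b \<circ> k" using h permutes_inverses[OF bp] by (auto simp: k_def fun_eq_iff)
    ultimately show "f \<in> b <#\<^bsub>S X \<Phi>\<^esub> stab_frame X \<Phi> x0" by (auto simp: lcos_S)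
  qed
  show "\<sigma> <#\<^bsub>S X \<Phi>\<^esub> stab_frame X \<Phi> x0 = \<tau> <#\<^bsub>S X \<Phi>\<^esub> stab_frame X \<Phi> x0"
    using sub[OF assms e] sub[OF assms(2,1) e[symmetric]] by blast
qed

end



lemma cinner_sum_left: "cinner (\<Sum>x\<in>A. c x *s u x) w = (\<Sum>x\<in>A. c x * cinner (u x) w)"
  unfolding cinner_def
  by (simp add: sum_distrib_left sum_distrib_right mult.assoc sum.swap[of _ UNIV A])

lemma cinner_sum_right: "cinner w (\<Sum>x\<in>A. c x *s u x) = (\<Sum>x\<in>A. cnj (c x) * cinner w (u x))"
  unfolding cinner_def
  by (simp add: sum_distrib_left sum_distrib_right mult.assoc mult.left_commute sum.swap[of _ UNIV A])

lemma cinner_self_zero: assumes "cinner w w = 0" shows "w = 0"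
proof -
  have "cinner w w = (\<Sum>i\<in>UNIV. complex_of_real ((cmod (w$i))^2))"
    unfolding cinner_def by (intro sum.cong refl) (rule complex_norm_square[symmetric])
  then have "cinner w w = complex_of_real (\<Sum>i\<in>UNIV. (cmod (w$i))^2)"
    by (simp only: of_real_sum)
  then have "(\<Sum>i\<in>UNIV. (cmod (w$i))^2) = 0" using assms by (metis of_real_eq_0_iff)
  then have "\<forall>i\<in>UNIV. (cmod (w$i))^2 = 0" by (subst (asm) sum_nonneg_eq_0_iff) auto
  then show ?thesis by (simp add: vec_eq_iff)
qed

lemma gram_inv_iso:
  assumes p: "\<sigma> permutes X" and g: "\<forall>x\<in>X. \<forall>y\<in>X. gram \<Phi> (\<sigma> x) (\<sigma> y) = gram \<Phi> x y"
  shows "cinner (\<Sum>x\<in>X. c x *s \<Phi> (\<sigma> x)) (\<Sum>y\<in>X. d y *s \<Phi> (\<sigma> y)) = cinner (\<Sum>x\<in>X. c x *s \<Phi> x) (\<Sum>y\<in>X. d y *s \<Phi> y)"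
proof -
  have "cinner (\<Phi> (\<sigma> x)) (\<Phi> (\<sigma> y)) = cinner (\<Phi> x) (\<Phi> y)" if "x \<in> X" "y \<in> X" for x y
    using g that unfolding gram_def by auto
  then show ?thesis by (simp add: cinner_sum_left cinner_sum_right)
qed

lemma sum_vec_diff: fixes c d :: "'x \<Rightarrow> complex" shows "(\<Sum>x\<in>X. (c x - d x) *s v x) = (\<Sum>x\<in>X. c x *s v x) - (\<Sum>x\<in>X. d x *s v x)"
proof -
  have "(\<Sum>x\<in>X. (c x - d x) * v x $ i) = (\<Sum>x\<in>X. c x * v x $ i - d x * v x $ i)" for i
    by (rule sum.cong) (simp_all add: left_diff_distrib)
  then show ?thesis by (simp add: vec_eq_iff sum_subtractf)
qed

lemma wd:
  assumes p: "\<sigma> permutes X" and g: "\<forall>x\<in>X. \<forall>y\<in>X. gram \<Phi> (\<sigma> x) (\<sigma> y) = gram \<Phi> x y"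
    and e: "(\<Sum>x\<in>X. c x *s \<Phi> x) = (\<Sum>x\<in>X. d x *s \<Phi> x)"
  shows "(\<Sum>x\<in>X. c x *s \<Phi> (\<sigma> x)) = (\<Sum>x\<in>X. d x *s \<Phi> (\<sigma> x))"
proof -
  let ?e = "\<lambda>x. c x - d x"
  have "(\<Sum>x\<in>X. ?e x *s \<Phi> x) = 0" unfolding sum_vec_diff using e by simp
  then have "cinner (\<Sum>x\<in>X. ?e x *s \<Phi> (\<sigma> x)) (\<Sum>x\<in>X. ?e x *s \<Phi> (\<sigma> x)) = 0"
    using gram_inv_iso[OF p g, of ?e ?e] by (simp add: cinner_def)
  then have "(\<Sum>x\<in>X. ?e x *s \<Phi> (\<sigma> x)) = 0" by (rule cinner_self_zero)
  then show ?thesis unfolding sum_vec_diff by simp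
qed

definition coef :: "'x set \<Rightarrow> ('x \<Rightarrow> complex^'n) \<Rightarrow> 'n \<Rightarrow> 'x \<Rightarrow> complex" where
  "coef X \<Phi> j = (SOME c. axis j 1 = (\<Sum>x\<in>X. c x *s \<Phi> x))"

definition rho :: "'x set \<Rightarrow> ('x \<Rightarrow> complex^'n) \<Rightarrow> ('x \<Rightarrow> 'x) \<Rightarrow> complex^'n^'n" where
  "rho X \<Phi> \<sigma> = (\<chi> i j. \<Sum>x\<in>X. coef X \<Phi> j x * \<Phi> (\<sigma> x) $ i)"

lemma coef: assumes "is_frame X \<Phi>" shows "axis j 1 = (\<Sum>x\<in>X. coef X \<Phi> j x *s \<Phi> x)"
proof -
  have "\<exists>c. axis j 1 = (\<Sum>x\<in>X. c x *s \<Phi> x)" using assms unfolding is_frame_def by blast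
  then show ?thesis unfolding coef_def by (rule someI_ex)
qed

lemma rho_apply:
  fixes \<Phi> :: "'x \<Rightarrow> complex^'n"
  assumes fr: "is_frame X \<Phi>" and p: "\<sigma> permutes X" and g: "\<forall>x\<in>X. \<forall>y\<in>X. gram \<Phi> (\<sigma> x) (\<sigma> y) = gram \<Phi> x y"
  shows "rho X \<Phi> \<sigma> *v (\<Sum>x\<in>X. c x *s \<Phi> x) = (\<Sum>x\<in>X. c x *s \<Phi> (\<sigma> x))"
proof -
  define w where "w = (\<Sum>x\<in>X. c x *s \<Phi> x)"
  define D where "D x = (\<Sum>j\<in>UNIV. w$j * coef X \<Phi> j x)" for x
  have 1: "rho X \<Phi> \<sigma> *v w = (\<Sum>x\<in>X. D x *s \<Phi> (\<sigma> x))"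
  proof -
    have "(rho X \<Phi> \<sigma> *v w) $ i = (\<Sum>x\<in>X. D x *s \<Phi> (\<sigma> x)) $ i" for i
    proof -
      have "(rho X \<Phi> \<sigma> *v w) $ i = (\<Sum>j\<in>UNIV. (\<Sum>x\<in>X. coef X \<Phi> j x * \<Phi> (\<sigma> x) $ i) * w $ j)"
        by (simp add: rho_def matrix_vector_mult_def)
      also have "\<dots> = (\<Sum>j\<in>UNIV. \<Sum>x\<in>X. w $ j * coef X \<Phi> j x * \<Phi> (\<sigma> x) $ i)"
        by (intro sum.cong refl) (simp add: sum_distrib_right sum_distrib_left mult_ac)
      also have "\<dots> = (\<Sum>x\<in>X. \<Sum>j\<in>UNIV. w $ j * coef X \<Phi> j x * \<Phi> (\<sigma> x) $ i)"
        by (rule sum.swap)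
      also have "\<dots> = (\<Sum>x\<in>X. D x * \<Phi> (\<sigma> x) $ i)"
        by (simp add: D_def sum_distrib_right)
      also have "\<dots> = (\<Sum>x\<in>X. D x *s \<Phi> (\<sigma> x)) $ i" by simp
      finally show ?thesis .
    qed
    then show ?thesis by (simp add: vec_eq_iff)
  qed
  have ax: "(\<Sum>x\<in>X. coef X \<Phi> j x * \<Phi> x $ i) = (if i = j then 1 else 0)" for i j
  proof -
    have "(axis j 1 :: complex^'n) $ i = (\<Sum>x\<in>X. coef X \<Phi> j x *s \<Phi> x) $ i" using coef[OF fr] by metis
    then show ?thesis by (simp add: axis_def)
  qed
  have 2: "(\<Sum>x\<in>X. D x *s \<Phi> x) = w"
  proof -
    have "(\<Sum>x\<in>X. D x *s \<Phi> x) $ i = w $ i" for i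
    proof -
      have "(\<Sum>x\<in>X. D x *s \<Phi> x) $ i = (\<Sum>x\<in>X. \<Sum>j\<in>UNIV. w$j * coef X \<Phi> j x * \<Phi> x $ i)"
        by (simp add: D_def sum_distrib_right)
      also have "\<dots> = (\<Sum>j\<in>UNIV. \<Sum>x\<in>X. w$j * coef X \<Phi> j x * \<Phi> x $ i)"
        by (rule sum.swap)
      also have "\<dots> = (\<Sum>j\<in>UNIV. w$j * (\<Sum>x\<in>X. coef X \<Phi> j x * \<Phi> x $ i))"
        by (simp add: sum_distrib_left mult.assoc)
      also have "\<dots> = w $ i" by (simp add: ax if_distrib cong: if_cong)
      finally show ?thesis .
    qed
    then show ?thesis by (simp add: vec_eq_iff)
  qed
  have "(\<Sum>x\<in>X. D x *s \<Phi> (\<sigma> x)) = (\<Sum>x\<in>X. c x *s \<Phi> (\<sigma> x))"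
    using wd[OF p g, of D c] 2 unfolding w_def by simp
  with 1 show ?thesis unfolding w_def by simp
qed

lemma delta_sum: "finite X \<Longrightarrow> y \<in> X \<Longrightarrow> (\<Sum>x\<in>X. (if x = y then 1 else 0) *s (f x :: complex^'n)) = f y"
proof -
  assume "finite X" "y \<in> X"
  have "(\<Sum>x\<in>X. (if x = y then 1 else 0) *s f x) = (\<Sum>x\<in>X. if x = y then f x else 0)"
    by (rule sum.cong) auto
  also have "\<dots> = f y" using \<open>finite X\<close> \<open>y \<in> X\<close> by (simp add: sum.delta')
  finally show ?thesis .
qed

lemma rho_Phi:
  assumes fr: "is_frame X \<Phi>" and p: "\<sigma> permutes X" and g: "\<forall>x\<in>X. \<forall>y\<in>X. gram \<Phi> (\<sigma> x) (\<sigma> y) = gram \<Phi> x y"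
    and y: "y \<in> X"
  shows "rho X \<Phi> \<sigma> *v \<Phi> y = \<Phi> (\<sigma> y)"
proof -
  have fin: "finite X" using fr is_frame_def by auto
  have "rho X \<Phi> \<sigma> *v (\<Sum>x\<in>X. (if x = y then 1 else 0) *s \<Phi> x) = (\<Sum>x\<in>X. (if x = y then 1 else 0) *s \<Phi> (\<sigma> x))"
    by (rule rho_apply[OF fr p g])
  then show ?thesis using delta_sum[OF fin y, of \<Phi>] delta_sum[OF fin y, of "\<lambda>x. \<Phi> (\<sigma> x)"] by simp
qed

lemma mat_vec_sum: "(A :: complex^'n^'n) *v (\<Sum>x\<in>X. c x *s v x) = (\<Sum>x\<in>X. c x *s (A *v v x))"
  by (simp add: vec_eq_iff matrix_vector_mult_def sum_distrib_left mult.left_commute sum.swap[of _ UNIV X])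

lemma mat_eq_frame:
  assumes fr: "is_frame X \<Phi>" and e: "\<forall>y\<in>X. (A :: complex^'n^'n) *v \<Phi> y = B *v \<Phi> y"
  shows "A = B"
proof -
  have "A *v w = B *v w" for w
  proof -
    obtain c where "w = (\<Sum>x\<in>X. c x *s \<Phi> x)" using fr unfolding is_frame_def by blast
    then show ?thesis using e by (simp add: mat_vec_sum)
  qed
  then show ?thesis by (simp add: matrix_eq)
qed



lemma memS: assumes "finite X" "\<sigma> \<in> carrier (S X \<Phi>)"
  shows "\<sigma> permutes X" "\<forall>x\<in>X. \<forall>y\<in>X. gram \<Phi> (\<sigma> x) (\<sigma> y) = gram \<Phi> x y"
  using assms carrier_S[OF assms(1)] by auto

lemma rho_unitary:
  fixes \<Phi> :: "'x \<Rightarrow> complex^'n"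
  assumes fr: "is_frame X \<Phi>" and s: "\<sigma> \<in> carrier (S X \<Phi>)"
  shows "unitary_mat (rho X \<Phi> \<sigma>)"
proof -
  have fin: "finite X" using fr is_frame_def by auto
  note m = memS[OF fin s]
  have "cinner (rho X \<Phi> \<sigma> *v u) (rho X \<Phi> \<sigma> *v v) = cinner u v" for u v
  proof -
    obtain cu where u: "u = (\<Sum>x\<in>X. cu x *s \<Phi> x)" using fr unfolding is_frame_def by blast
    obtain cv where v: "v = (\<Sum>x\<in>X. cv x *s \<Phi> x)" using fr unfolding is_frame_def by blast
    show ?thesis unfolding u v rho_apply[OF fr m] by (rule gram_inv_iso[OF m])
  qed
  moreover have "surj (\<lambda>u. rho X \<Phi> \<sigma> *v u)"
  proof -
    have "w \<in> range (\<lambda>u. rho X \<Phi> \<sigma> *v u)" for w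
    proof -
      obtain c where w: "w = (\<Sum>x\<in>X. c x *s \<Phi> x)" using fr unfolding is_frame_def by blast
      have "rho X \<Phi> \<sigma> *v (\<Sum>x\<in>X. c (\<sigma> x) *s \<Phi> x) = (\<Sum>x\<in>X. c (\<sigma> x) *s \<Phi> (\<sigma> x))"
        by (rule rho_apply[OF fr m])
      also have "\<dots> = w" unfolding w using sum.permute[OF m(1), of "\<lambda>y. c y *s \<Phi> y"] by (simp add: o_def)
      finally show ?thesis by (metis rangeI)
    qed
    then show ?thesis by auto
  qed
  ultimately show ?thesis unfolding unitary_mat_def by simp
qed

lemma rho_Phi_S:
  fixes \<Phi> :: "'x \<Rightarrow> complex^'n"
  assumes fr: "is_frame X \<Phi>" and s: "\<sigma> \<in> carrier (S X \<Phi>)" and y: "y \<in> X"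
  shows "rho X \<Phi> \<sigma> *v \<Phi> y = \<Phi> (\<sigma> y)"
proof -
  have fin: "finite X" using fr is_frame_def by auto
  show ?thesis by (rule rho_Phi[OF fr memS[OF fin s] y])
qed

lemma unitary_rep_S:
  fixes \<Phi> :: "'x \<Rightarrow> complex^'n"
  assumes fr: "is_frame X \<Phi>"
  shows "unitary_rep (S X \<Phi>) (rho X \<Phi>)"
proof -
  have fin: "finite X" using fr is_frame_def by auto
  have hom: "rho X \<Phi> (\<sigma> \<circ> \<tau>) = rho X \<Phi> \<sigma> ** rho X \<Phi> \<tau>"
    if s: "\<sigma> \<in> carrier (S X \<Phi>)" and t: "\<tau> \<in> carrier (S X \<Phi>)" for \<sigma> \<tau>
  proof (rule mat_eq_frame[OF fr], rule ballI)
    fix y assume y: "y \<in> X"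
    have st: "\<sigma> \<circ> \<tau> \<in> carrier (S X \<Phi>)" by (rule S_comp_closed[OF fin s t])
    have ty: "\<tau> y \<in> X" by (simp add: permutes_in_image[OF memS(1)[OF fin t]] y)
    have 1: "rho X \<Phi> (\<sigma> \<circ> \<tau>) *v \<Phi> y = \<Phi> (\<sigma> (\<tau> y))"
      using rho_Phi_S[OF fr st y] by simp
    have 2: "(rho X \<Phi> \<sigma> ** rho X \<Phi> \<tau>) *v \<Phi> y = rho X \<Phi> \<sigma> *v (rho X \<Phi> \<tau> *v \<Phi> y)"
      by (rule matrix_vector_mul_assoc[symmetric])
    show "rho X \<Phi> (\<sigma> \<circ> \<tau>) *v \<Phi> y = (rho X \<Phi> \<sigma> ** rho X \<Phi> \<tau>) *v \<Phi> y"
      unfolding 1 2 rho_Phi_S[OF fr t y] rho_Phi_S[OF fr s ty] ..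
  qed
  show ?thesis unfolding unitary_rep_def
    using rho_unitary[OF fr] hom by simp
qed

definition betaS :: "'x set \<Rightarrow> ('x \<Rightarrow> complex^'n) \<Rightarrow> 'x \<Rightarrow> 'x \<Rightarrow> ('x \<Rightarrow> 'x) set" where
  "betaS X \<Phi> x0 x = (SOME \<sigma>. \<sigma> \<in> carrier (S X \<Phi>) \<and> \<sigma> x0 = x) <#\<^bsub>S X \<Phi>\<^esub> stab_frame X \<Phi> x0"

lemma betaS_eq:
  assumes fin: "finite X" and tr: "\<forall>x\<in>X. \<forall>y\<in>X. \<exists>\<sigma>\<in>carrier (S X \<Phi>). \<sigma> x = y"
    and x0: "x0 \<in> X" and x: "x \<in> X" and s: "\<sigma> \<in> carrier (S X \<Phi>)" and sx: "\<sigma> x0 = x"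
  shows "betaS X \<Phi> x0 x = \<sigma> <#\<^bsub>S X \<Phi>\<^esub> stab_frame X \<Phi> x0"
proof -
  have "\<exists>\<sigma>. \<sigma> \<in> carrier (S X \<Phi>) \<and> \<sigma> x0 = x" using tr x0 x by blast
  then have "(SOME \<sigma>. \<sigma> \<in> carrier (S X \<Phi>) \<and> \<sigma> x0 = x) \<in> carrier (S X \<Phi>) \<and> (SOME \<sigma>. \<sigma> \<in> carrier (S X \<Phi>) \<and> \<sigma> x0 = x) x0 = x"
    by (rule someI_ex)
  then show ?thesis unfolding betaS_def using coset_eq_S[OF fin _ s] sx by auto
qed

lemma betaS_ex:
  assumes fin: "finite X" and tr: "\<forall>x\<in>X. \<forall>y\<in>X. \<exists>\<sigma>\<in>carrier (S X \<Phi>). \<sigma> x = y"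
    and x0: "x0 \<in> X" and x: "x \<in> X"
  obtains \<sigma> where "\<sigma> \<in> carrier (S X \<Phi>)" "\<sigma> x0 = x" "betaS X \<Phi> x0 x = \<sigma> <#\<^bsub>S X \<Phi>\<^esub> stab_frame X \<Phi> x0"
proof -
  obtain \<sigma> where "\<sigma> \<in> carrier (S X \<Phi>)" "\<sigma> x0 = x" using tr x0 x by blast
  then show ?thesis using that betaS_eq[OF fin tr x0 x] by blast
qed

lemma betaS_bij:
  assumes fin: "finite X" and tr: "\<forall>x\<in>X. \<forall>y\<in>X. \<exists>\<sigma>\<in>carrier (S X \<Phi>). \<sigma> x = y" and x0: "x0 \<in> X"
  shows "bij_betw (betaS X \<Phi> x0) X (lcosets (S X \<Phi>) (stab_frame X \<Phi> x0))"
proof (rule bij_betw_imageI)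
  show "inj_on (betaS X \<Phi> x0) X"
  proof (rule inj_onI)
    fix x y assume x: "x \<in> X" and y: "y \<in> X" and e: "betaS X \<Phi> x0 x = betaS X \<Phi> x0 y"
    obtain \<sigma> where \<sigma>: "\<sigma> \<in> carrier (S X \<Phi>)" "\<sigma> x0 = x" "betaS X \<Phi> x0 x = \<sigma> <#\<^bsub>S X \<Phi>\<^esub> stab_frame X \<Phi> x0"
      using betaS_ex[OF fin tr x0 x] by blast
    obtain \<tau> where \<tau>: "\<tau> \<in> carrier (S X \<Phi>)" "\<tau> x0 = y" "betaS X \<Phi> x0 y = \<tau> <#\<^bsub>S X \<Phi>\<^esub> stab_frame X \<Phi> x0"
      using betaS_ex[OF fin tr x0 y] by blast
    show "x = y" using e \<sigma> \<tau> coset_eq_S[OF fin \<sigma>(1) \<tau>(1)] by simp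
  qed
next
  show "betaS X \<Phi> x0 ` X = lcosets (S X \<Phi>) (stab_frame X \<Phi> x0)"
  proof
    show "betaS X \<Phi> x0 ` X \<subseteq> lcosets (S X \<Phi>) (stab_frame X \<Phi> x0)"
    proof
      fix a assume "a \<in> betaS X \<Phi> x0 ` X"
      then obtain x where x: "x \<in> X" "a = betaS X \<Phi> x0 x" by blast
      obtain \<sigma> where \<sigma>: "\<sigma> \<in> carrier (S X \<Phi>)" "\<sigma> x0 = x" "betaS X \<Phi> x0 x = \<sigma> <#\<^bsub>S X \<Phi>\<^esub> stab_frame X \<Phi> x0"
        using betaS_ex[OF fin tr x0 x(1)] by blast
      have "a = \<sigma> <#\<^bsub>S X \<Phi>\<^esub> stab_frame X \<Phi> x0" using x \<sigma> by simp
      then show "a \<in> lcosets (S X \<Phi>) (stab_frame X \<Phi> x0)" unfolding lcosets_def using \<sigma>(1) by blast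
    qed
  next
    show "lcosets (S X \<Phi>) (stab_frame X \<Phi> x0) \<subseteq> betaS X \<Phi> x0 ` X"
    proof
      fix a assume "a \<in> lcosets (S X \<Phi>) (stab_frame X \<Phi> x0)"
      then obtain \<sigma> where \<sigma>: "\<sigma> \<in> carrier (S X \<Phi>)" "a = \<sigma> <#\<^bsub>S X \<Phi>\<^esub> stab_frame X \<Phi> x0"
        unfolding lcosets_def by blast
      have x: "\<sigma> x0 \<in> X" by (simp add: permutes_in_image[OF memS(1)[OF fin \<sigma>(1)]] x0)
      have "a = betaS X \<Phi> x0 (\<sigma> x0)" using betaS_eq[OF fin tr x0 x \<sigma>(1) refl] \<sigma>(2) by simp
      then show "a \<in> betaS X \<Phi> x0 ` X" using x by blast
    qed
  qed
qed

lemma part3: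
  fixes \<Phi> :: "'x \<Rightarrow> complex^'n"
  assumes fr: "is_frame X \<Phi>" and x0: "x0 \<in> X" and tr: "\<forall>x\<in>X. \<forall>y\<in>X. \<exists>\<sigma>\<in>carrier (S X \<Phi>). \<sigma> x = y"
  shows "(\<forall>x\<in>X. \<forall>\<sigma>\<in>carrier (S X \<Phi>). \<sigma> x0 = x \<longrightarrow> betaS X \<Phi> x0 x = \<sigma> <#\<^bsub>S X \<Phi>\<^esub> stab_frame X \<Phi> x0)
     \<and> GH_frame_via (S X \<Phi>) (stab_frame X \<Phi> x0) X \<Phi> (betaS X \<Phi> x0)"
proof -
  have fin: "finite X" using fr is_frame_def by auto
  have A: "\<forall>x\<in>X. \<forall>\<sigma>\<in>carrier (S X \<Phi>). \<sigma> x0 = x \<longrightarrow> betaS X \<Phi> x0 x = \<sigma> <#\<^bsub>S X \<Phi>\<^esub> stab_frame X \<Phi> x0"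
    using betaS_eq[OF fin tr x0] by blast
  have fix0: "\<forall>h\<in>stab_frame X \<Phi> x0. rho X \<Phi> h *v \<Phi> x0 = \<Phi> x0"
    using rho_Phi_S[OF fr _ x0] unfolding stab_frame_def by auto
  have fr3: "\<forall>x\<in>X. \<forall>g\<in>carrier (S X \<Phi>). betaS X \<Phi> x0 x = g <#\<^bsub>S X \<Phi>\<^esub> stab_frame X \<Phi> x0 \<longrightarrow> \<Phi> x = rho X \<Phi> g *v \<Phi> x0"
  proof (intro ballI impI)
    fix x g assume x: "x \<in> X" and g: "g \<in> carrier (S X \<Phi>)" and e: "betaS X \<Phi> x0 x = g <#\<^bsub>S X \<Phi>\<^esub> stab_frame X \<Phi> x0"
    obtain \<sigma> where \<sigma>: "\<sigma> \<in> carrier (S X \<Phi>)" "\<sigma> x0 = x" "betaS X \<Phi> x0 x = \<sigma> <#\<^bsub>S X \<Phi>\<^esub> stab_frame X \<Phi> x0"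
      using betaS_ex[OF fin tr x0 x] by blast
    have "g <#\<^bsub>S X \<Phi>\<^esub> stab_frame X \<Phi> x0 = \<sigma> <#\<^bsub>S X \<Phi>\<^esub> stab_frame X \<Phi> x0" using e \<sigma>(3) by simp
    then have "g x0 = \<sigma> x0" using coset_eq_S[OF fin g \<sigma>(1), of x0] by simp
    then have "g x0 = x" using \<sigma>(2) by simp
    then show "\<Phi> x = rho X \<Phi> g *v \<Phi> x0" using rho_Phi_S[OF fr g x0] by simp
  qed
  have "GH_frame_via (S X \<Phi>) (stab_frame X \<Phi> x0) X \<Phi> (betaS X \<Phi> x0)"
    unfolding GH_frame_via_def
    apply (intro conjI group_S[OF fin] finite_S[OF fin] subgroup_stab[OF fin] betaS_bij[OF fin tr x0])
    apply (rule exI[of _ "rho X \<Phi>"], rule exI[of _ "\<Phi> x0"])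
    using unitary_rep_S[OF fr] fix0 fr3 by blast
  with A show ?thesis by blast
qed



context
  fixes G :: "('g,'b) monoid_scheme" and H :: "'g set" and X :: "'x set" and \<Phi> :: "'x \<Rightarrow> complex^'n"
    and \<beta> :: "'x \<Rightarrow> 'g set" and \<rho> :: "'g \<Rightarrow> complex^'n^'n" and v :: "complex^'n"
  assumes grp: "group G" and sub: "subgroup H G" and bij: "bij_betw \<beta> X (lcosets G H)"
    and rep: "unitary_rep G \<rho>" and fixv: "\<forall>h\<in>H. \<rho> h *v v = v"
    and phi: "\<forall>x\<in>X. \<forall>g\<in>carrier G. \<beta> x = g <#\<^bsub>G\<^esub> H \<longrightarrow> \<Phi> x = \<rho> g *v v"
    and fin: "finite X"
begin

definition act :: "'g \<Rightarrow> 'x \<Rightarrow> 'x" where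
  "act g x = (if x \<in> X then inv_into X \<beta> (g <#\<^bsub>G\<^esub> \<beta> x) else x)"

lemma mclosed: "a \<in> carrier G \<Longrightarrow> b \<in> carrier G \<Longrightarrow> a \<otimes>\<^bsub>G\<^esub> b \<in> carrier G"
  by (rule monoid.m_closed[OF group.is_monoid[OF grp]])

lemma Hsub: "H \<subseteq> carrier G" using sub subgroup.subset by blast

lemma beta_in: "x \<in> X \<Longrightarrow> \<exists>a\<in>carrier G. \<beta> x = a <#\<^bsub>G\<^esub> H"
  using bij unfolding bij_betw_def lcosets_def by blast

lemma beta_inj: "x \<in> X \<Longrightarrow> y \<in> X \<Longrightarrow> \<beta> x = \<beta> y \<Longrightarrow> x = y"
  using bij unfolding bij_betw_def inj_on_def by blast

lemma coset_in: "a \<in> carrier G \<Longrightarrow> a <#\<^bsub>G\<^esub> H \<in> \<beta> ` X"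
  using bij unfolding bij_betw_def lcosets_def by blast

lemma act_beta:
  assumes g: "g \<in> carrier G" and x: "x \<in> X"
  shows "act g x \<in> X" "\<beta> (act g x) = g <#\<^bsub>G\<^esub> \<beta> x"
proof -
  obtain a where a: "a \<in> carrier G" "\<beta> x = a <#\<^bsub>G\<^esub> H" using beta_in[OF x] by blast
  have e: "g <#\<^bsub>G\<^esub> \<beta> x = (g \<otimes>\<^bsub>G\<^esub> a) <#\<^bsub>G\<^esub> H"
    using a g group.lcos_m_assoc[OF grp Hsub g a(1)] by simp
  have "g \<otimes>\<^bsub>G\<^esub> a \<in> carrier G" by (rule mclosed[OF g a(1)])
  then have im: "g <#\<^bsub>G\<^esub> \<beta> x \<in> \<beta> ` X" using e coset_in by simp
  show "act g x \<in> X" unfolding act_def using x im by (simp add: inv_into_into)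
  show "\<beta> (act g x) = g <#\<^bsub>G\<^esub> \<beta> x" unfolding act_def using x im by (simp add: f_inv_into_f)
qed

lemma act_Phi:
  assumes g: "g \<in> carrier G" and x: "x \<in> X"
  shows "\<Phi> (act g x) = \<rho> g *v \<Phi> x"
proof -
  obtain a where a: "a \<in> carrier G" "\<beta> x = a <#\<^bsub>G\<^esub> H" using beta_in[OF x] by blast
  have ga: "g \<otimes>\<^bsub>G\<^esub> a \<in> carrier G" by (rule mclosed[OF g a(1)])
  have "\<beta> (act g x) = (g \<otimes>\<^bsub>G\<^esub> a) <#\<^bsub>G\<^esub> H"
    using act_beta[OF g x] a g group.lcos_m_assoc[OF grp Hsub g a(1)] by simp
  then have "\<Phi> (act g x) = \<rho> (g \<otimes>\<^bsub>G\<^esub> a) *v v" by (rule phi[rule_format, OF act_beta(1)[OF g x] ga])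
  also have "\<dots> = \<rho> g *v (\<rho> a *v v)"
    using rep g a(1) unfolding unitary_rep_def by (simp add: matrix_vector_mul_assoc)
  also have "\<rho> a *v v = \<Phi> x" by (rule phi[rule_format, OF x a(1) a(2), symmetric])
  finally show ?thesis .
qed

lemma act_act:
  assumes g: "g \<in> carrier G" and h: "h \<in> carrier G" and x: "x \<in> X"
  shows "act h (act g x) = act (h \<otimes>\<^bsub>G\<^esub> g) x"
proof -
  obtain a where a: "a \<in> carrier G" "\<beta> x = a <#\<^bsub>G\<^esub> H" using beta_in[OF x] by blast
  have hg: "h \<otimes>\<^bsub>G\<^esub> g \<in> carrier G" by (rule mclosed[OF h g])
  have ga: "g \<otimes>\<^bsub>G\<^esub> a \<in> carrier G" by (rule mclosed[OF g a(1)])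
  have "\<beta> (act h (act g x)) = h <#\<^bsub>G\<^esub> (g <#\<^bsub>G\<^esub> (a <#\<^bsub>G\<^esub> H))"
    using act_beta[OF h act_beta(1)[OF g x]] act_beta[OF g x] a by simp
  also have "\<dots> = (h \<otimes>\<^bsub>G\<^esub> g \<otimes>\<^bsub>G\<^esub> a) <#\<^bsub>G\<^esub> H"
    using group.lcos_m_assoc[OF grp Hsub g a(1)] group.lcos_m_assoc[OF grp Hsub h ga]
      monoid.m_assoc[OF group.is_monoid[OF grp] h g a(1)] by simp
  also have "\<dots> = \<beta> (act (h \<otimes>\<^bsub>G\<^esub> g) x)"
    using act_beta[OF hg x] a group.lcos_m_assoc[OF grp Hsub hg a(1)] by simp
  finally show ?thesis
    by (rule beta_inj[OF act_beta(1)[OF h act_beta(1)[OF g x]] act_beta(1)[OF hg x]])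
qed

lemma act_one: assumes x: "x \<in> X" shows "act \<one>\<^bsub>G\<^esub> x = x"
proof -
  obtain a where a: "a \<in> carrier G" "\<beta> x = a <#\<^bsub>G\<^esub> H" using beta_in[OF x] by blast
  have o: "\<one>\<^bsub>G\<^esub> \<in> carrier G" by (rule monoid.one_closed[OF group.is_monoid[OF grp]])
  have "\<beta> (act \<one>\<^bsub>G\<^esub> x) = \<one>\<^bsub>G\<^esub> <#\<^bsub>G\<^esub> (a <#\<^bsub>G\<^esub> H)"
    using act_beta(2)[OF o x] a(2) by simp
  also have "\<dots> = \<beta> x"
    using group.lcos_m_assoc[OF grp Hsub o a(1)] monoid.l_one[OF group.is_monoid[OF grp] a(1)] a(2) by simp
  finally show ?thesis by (rule beta_inj[OF act_beta(1)[OF o x] x])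
qed

lemma act_perm: assumes g: "g \<in> carrier G" shows "act g permutes X"
proof (rule bij_imp_permutes)
  have ig: "inv\<^bsub>G\<^esub> g \<in> carrier G" using group.inv_closed[OF grp g] .
  show "bij_betw (act g) X X"
  proof (rule bij_betw_byWitness[where f'="act (inv\<^bsub>G\<^esub> g)"])
    show "\<forall>a\<in>X. act (inv\<^bsub>G\<^esub> g) (act g a) = a"
      using act_act[OF g ig] act_one group.l_inv[OF grp g] by simp
    show "\<forall>a\<in>X. act g (act (inv\<^bsub>G\<^esub> g) a) = a"
      using act_act[OF ig g] act_one group.r_inv[OF grp g] by simp
    show "act g ` X \<subseteq> X" using act_beta(1)[OF g] by blast
    show "act (inv\<^bsub>G\<^esub> g) ` X \<subseteq> X" using act_beta(1)[OF ig] by blast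
  qed
next
  fix x assume "x \<notin> X" then show "act g x = x" unfolding act_def by simp
qed

lemma act_S: assumes g: "g \<in> carrier G" shows "act g \<in> carrier (S X \<Phi>)"
proof -
  have u: "unitary_mat (\<rho> g)" using rep g unfolding unitary_rep_def by blast
  have "gram \<Phi> (act g x) (act g y) = gram \<Phi> x y" if "x \<in> X" "y \<in> X" for x y
    using u that act_Phi[OF g] unfolding gram_def unitary_mat_def by simp
  then show ?thesis unfolding carrier_S[OF fin] using act_perm[OF g] by simp
qed

lemma transitive: "\<forall>x\<in>X. \<forall>y\<in>X. \<exists>\<sigma>\<in>carrier (S X \<Phi>). \<sigma> x = y"
proof (intro ballI)
  fix x y assume x: "x \<in> X" and y: "y \<in> X"
  obtain a where a: "a \<in> carrier G" "\<beta> x = a <#\<^bsub>G\<^esub> H" using beta_in[OF x] by blast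
  obtain b where b: "b \<in> carrier G" "\<beta> y = b <#\<^bsub>G\<^esub> H" using beta_in[OF y] by blast
  define g where "g = b \<otimes>\<^bsub>G\<^esub> inv\<^bsub>G\<^esub> a"
  have ia: "inv\<^bsub>G\<^esub> a \<in> carrier G" using group.inv_closed[OF grp a(1)] .
  have g: "g \<in> carrier G" unfolding g_def by (rule mclosed[OF b(1) ia])
  have "g \<otimes>\<^bsub>G\<^esub> a = b" unfolding g_def
    using monoid.m_assoc[OF group.is_monoid[OF grp] b(1) ia a(1)] group.l_inv[OF grp a(1)] monoid.r_one[OF group.is_monoid[OF grp] b(1)] by simp
  then have "\<beta> (act g x) = \<beta> y"
    using act_beta[OF g x] a b group.lcos_m_assoc[OF grp Hsub g a(1)] by simp
  then have "act g x = y" by (rule beta_inj[OF act_beta(1)[OF g x] y])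
  then show "\<exists>\<sigma>\<in>carrier (S X \<Phi>). \<sigma> x = y" using act_S[OF g] by blast
qed

lemma betaS_act:
  assumes fr: "is_frame X \<Phi>" and x0: "x0 \<in> X" and s: "\<sigma> \<in> carrier (S X \<Phi>)" and x: "x \<in> X"
  shows "betaS X \<Phi> x0 (\<sigma> x) = \<sigma> <#\<^bsub>S X \<Phi>\<^esub> betaS X \<Phi> x0 x"
proof -
  obtain \<tau> where \<tau>: "\<tau> \<in> carrier (S X \<Phi>)" "\<tau> x0 = x" "betaS X \<Phi> x0 x = \<tau> <#\<^bsub>S X \<Phi>\<^esub> stab_frame X \<Phi> x0"
    using betaS_ex[OF fin transitive x0 x] by blast
  have st: "\<sigma> \<circ> \<tau> \<in> carrier (S X \<Phi>)" by (rule S_comp_closed[OF fin s \<tau>(1)])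
  have sx: "\<sigma> x \<in> X" by (simp add: permutes_in_image[OF memS(1)[OF fin s]] x)
  have "\<sigma> <#\<^bsub>S X \<Phi>\<^esub> (\<tau> <#\<^bsub>S X \<Phi>\<^esub> stab_frame X \<Phi> x0) = (\<sigma> \<circ> \<tau>) <#\<^bsub>S X \<Phi>\<^esub> stab_frame X \<Phi> x0"
    using group.lcos_m_assoc[OF group_S[OF fin] stab_sub[OF fin] s \<tau>(1)] by simp
  moreover have "betaS X \<Phi> x0 (\<sigma> x) = (\<sigma> \<circ> \<tau>) <#\<^bsub>S X \<Phi>\<^esub> stab_frame X \<Phi> x0"
    using betaS_eq[OF fin transitive x0 sx st] \<tau>(2) by simp
  ultimately show ?thesis using \<tau>(3) by simp
qed

lemma gelfand_transfer:
  assumes fr: "is_frame X \<Phi>" and x0: "x0 \<in> X" and gp: "gelfand_pair G H"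
  shows "gelfand_pair (S X \<Phi>) (stab_frame X \<Phi> x0)"
  unfolding gelfand_pair_def
proof (intro allI impI ballI)
  let ?L = "lcosets (S X \<Phi>) (stab_frame X \<Phi> x0)" and ?LG = "lcosets G H"
  let ?\<gamma> = "betaS X \<Phi> x0" and ?bi = "inv_into X \<beta>"
  fix M N :: "('x \<Rightarrow> 'x) set \<Rightarrow> ('x \<Rightarrow> 'x) set \<Rightarrow> complex"
  assume inv: "\<forall>g\<in>carrier (S X \<Phi>). \<forall>a\<in>?L. \<forall>b\<in>?L.
      M (g <#\<^bsub>S X \<Phi>\<^esub> a) (g <#\<^bsub>S X \<Phi>\<^esub> b) = M a b \<and> N (g <#\<^bsub>S X \<Phi>\<^esub> a) (g <#\<^bsub>S X \<Phi>\<^esub> b) = N a b"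
  fix A B assume A: "A \<in> ?L" and B: "B \<in> ?L"
  have gb: "bij_betw ?\<gamma> X ?L" by (rule betaS_bij[OF fin transitive x0])
  have bib: "bij_betw ?bi ?LG X" by (rule bij_betw_inv_into[OF bij])
  have comp: "bij_betw (\<lambda>c. ?\<gamma> (?bi c)) ?LG ?L" using bij_betw_trans[OF bib gb] by (simp add: o_def)
  define M' where "M' a b = M (?\<gamma> (?bi a)) (?\<gamma> (?bi b))" for a b
  define N' where "N' a b = N (?\<gamma> (?bi a)) (?\<gamma> (?bi b))" for a b
  have bi_act: "?bi (g <#\<^bsub>G\<^esub> a) = act g (?bi a)" if g: "g \<in> carrier G" and a: "a \<in> ?LG" for g a
  proof -
    have x: "?bi a \<in> X" by (rule bij_betw_apply[OF bib a])
    have "\<beta> (?bi a) = a" using bij a by (simp add: bij_betw_def f_inv_into_f)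
    then have "\<beta> (act g (?bi a)) = g <#\<^bsub>G\<^esub> a" using act_beta(2)[OF g x] by simp
    then show ?thesis using act_beta(1)[OF g x] bij by (metis bij_betw_def inv_into_f_f)
  qed
  have ginv: "\<forall>g\<in>carrier G. \<forall>a\<in>?LG. \<forall>b\<in>?LG.
      M' (g <#\<^bsub>G\<^esub> a) (g <#\<^bsub>G\<^esub> b) = M' a b \<and> N' (g <#\<^bsub>G\<^esub> a) (g <#\<^bsub>G\<^esub> b) = N' a b"
  proof (intro ballI)
    fix g a b assume g: "g \<in> carrier G" and a: "a \<in> ?LG" and b: "b \<in> ?LG"
    have xa: "?bi a \<in> X" by (rule bij_betw_apply[OF bib a])
    have xb: "?bi b \<in> X" by (rule bij_betw_apply[OF bib b])
    have ga: "?\<gamma> (?bi a) \<in> ?L" by (rule bij_betw_apply[OF gb xa])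
    have gb': "?\<gamma> (?bi b) \<in> ?L" by (rule bij_betw_apply[OF gb xb])
    have "?\<gamma> (?bi (g <#\<^bsub>G\<^esub> a)) = act g <#\<^bsub>S X \<Phi>\<^esub> ?\<gamma> (?bi a)"
      using bi_act[OF g a] betaS_act[OF fr x0 act_S[OF g] xa] by simp
    moreover have "?\<gamma> (?bi (g <#\<^bsub>G\<^esub> b)) = act g <#\<^bsub>S X \<Phi>\<^esub> ?\<gamma> (?bi b)"
      using bi_act[OF g b] betaS_act[OF fr x0 act_S[OF g] xb] by simp
    ultimately show "M' (g <#\<^bsub>G\<^esub> a) (g <#\<^bsub>G\<^esub> b) = M' a b \<and> N' (g <#\<^bsub>G\<^esub> a) (g <#\<^bsub>G\<^esub> b) = N' a b"
      unfolding M'_def N'_def using inv[rule_format, OF act_S[OF g] ga gb'] by simp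
  qed
  obtain xa where xa: "xa \<in> X" "A = ?\<gamma> xa" using A gb unfolding bij_betw_def by blast
  obtain xb where xb: "xb \<in> X" "B = ?\<gamma> xb" using B gb unfolding bij_betw_def by blast
  have a: "\<beta> xa \<in> ?LG" by (rule bij_betw_apply[OF bij xa(1)])
  have b: "\<beta> xb \<in> ?LG" by (rule bij_betw_apply[OF bij xb(1)])
  have ia: "?bi (\<beta> xa) = xa" and ib: "?bi (\<beta> xb) = xb"
    using bij xa xb by (auto simp: bij_betw_def inv_into_f_f)
  have "(\<Sum>c\<in>?LG. M' (\<beta> xa) c * N' c (\<beta> xb)) = (\<Sum>c\<in>?LG. N' (\<beta> xa) c * M' c (\<beta> xb))"
    using gp[unfolded gelfand_pair_def, THEN spec[where x=M'], THEN spec[where x=N'], THEN mp, OF ginv] a b by blast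
  then have "(\<Sum>c\<in>?LG. M A (?\<gamma> (?bi c)) * N (?\<gamma> (?bi c)) B) = (\<Sum>c\<in>?LG. N A (?\<gamma> (?bi c)) * M (?\<gamma> (?bi c)) B)"
    unfolding M'_def N'_def ia ib xa(2) xb(2) by simp
  then show "(\<Sum>C\<in>?L. M A C * N C B) = (\<Sum>C\<in>?L. N A C * M C B)"
    using sum.reindex_bij_betw[OF comp, of "\<lambda>C. M A C * N C B"] sum.reindex_bij_betw[OF comp, of "\<lambda>C. N A C * M C B"]
    by simp
qed

end



context
  fixes K :: "('k,'c) monoid_scheme" and L :: "'k set" and h :: "nat \<Rightarrow> 'k" and A :: "nat set"
  assumes grp: "group K" and sub: "subgroup L K" and hb: "bij_betw h A (carrier K)"
begin

abbreviation "gi \<equiv> inv_into A h"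

definition G' :: "nat monoid" where
  "G' = \<lparr>carrier = A, mult = (\<lambda>a b. gi (h a \<otimes>\<^bsub>K\<^esub> h b)), one = gi \<one>\<^bsub>K\<^esub>\<rparr>"

lemma mon: "monoid K" by (rule group.is_monoid[OF grp])

lemma hg: "s \<in> carrier K \<Longrightarrow> h (gi s) = s"
  using hb by (simp add: bij_betw_def f_inv_into_f)
lemma gh: "a \<in> A \<Longrightarrow> gi (h a) = a"
  using hb by (simp add: bij_betw_def inv_into_f_f)
lemma gA: "s \<in> carrier K \<Longrightarrow> gi s \<in> A"
  by (rule inv_into_into) (use hb in \<open>simp add: bij_betw_def\<close>)
lemma hK: "a \<in> A \<Longrightarrow> h a \<in> carrier K"
  by (rule bij_betw_apply[OF hb])

lemma Lsub: "L \<subseteq> carrier K" by (rule subgroup.subset[OF sub])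

lemma G'_simps: "carrier G' = A" "mult G' a b = gi (h a \<otimes>\<^bsub>K\<^esub> h b)" "one G' = gi \<one>\<^bsub>K\<^esub>"
  by (simp_all add: G'_def)

lemma group_G': "group G'"
proof (rule groupI)
  fix x y assume "x \<in> carrier G'" "y \<in> carrier G'"
  then show "x \<otimes>\<^bsub>G'\<^esub> y \<in> carrier G'"
    by (simp add: G'_simps gA hK monoid.m_closed[OF mon])
next
  show "\<one>\<^bsub>G'\<^esub> \<in> carrier G'" by (simp add: G'_simps gA monoid.one_closed[OF mon])
next
  fix x y z assume x: "x \<in> carrier G'" and y: "y \<in> carrier G'" and z: "z \<in> carrier G'"
  then have x': "h x \<in> carrier K" and y': "h y \<in> carrier K" and z': "h z \<in> carrier K"
    by (simp_all add: G'_simps hK)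
  show "x \<otimes>\<^bsub>G'\<^esub> y \<otimes>\<^bsub>G'\<^esub> z = x \<otimes>\<^bsub>G'\<^esub> (y \<otimes>\<^bsub>G'\<^esub> z)"
    using x' y' z' by (simp add: G'_simps hg monoid.m_closed[OF mon] monoid.m_assoc[OF mon])
next
  fix x assume x: "x \<in> carrier G'"
  then have x': "h x \<in> carrier K" by (simp add: G'_simps hK)
  show "\<one>\<^bsub>G'\<^esub> \<otimes>\<^bsub>G'\<^esub> x = x"
    using x x' by (simp add: G'_simps hg gh monoid.one_closed[OF mon] monoid.l_one[OF mon])
next
  fix x assume x: "x \<in> carrier G'"
  then have x': "h x \<in> carrier K" by (simp add: G'_simps hK)
  have i: "inv\<^bsub>K\<^esub> (h x) \<in> carrier K" by (rule group.inv_closed[OF grp x'])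
  show "\<exists>y\<in>carrier G'. y \<otimes>\<^bsub>G'\<^esub> x = \<one>\<^bsub>G'\<^esub>"
  proof
    show "gi (inv\<^bsub>K\<^esub> (h x)) \<in> carrier G'" using i by (simp add: G'_simps gA)
    show "gi (inv\<^bsub>K\<^esub> (h x)) \<otimes>\<^bsub>G'\<^esub> x = \<one>\<^bsub>G'\<^esub>"
      using i x' by (simp add: G'_simps hg group.l_inv[OF grp])
  qed
qed

lemma inv_G': assumes a: "a \<in> A" shows "inv\<^bsub>G'\<^esub> a = gi (inv\<^bsub>K\<^esub> (h a))"
proof (rule group.inv_equality[OF group_G'])
  have a': "h a \<in> carrier K" by (rule hK[OF a])
  have i: "inv\<^bsub>K\<^esub> (h a) \<in> carrier K" by (rule group.inv_closed[OF grp a'])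
  show "gi (inv\<^bsub>K\<^esub> (h a)) \<otimes>\<^bsub>G'\<^esub> a = \<one>\<^bsub>G'\<^esub>"
    using i a' by (simp add: G'_simps hg group.l_inv[OF grp])
  show "a \<in> carrier G'" using a by (simp add: G'_simps)
  show "gi (inv\<^bsub>K\<^esub> (h a)) \<in> carrier G'" using i by (simp add: G'_simps gA)
qed

lemma subgroup_H': "subgroup (gi ` L) G'"
proof (rule group.subgroupI[OF group_G'])
  show "gi ` L \<subseteq> carrier G'" using Lsub by (auto simp: G'_simps gA)
  show "gi ` L \<noteq> {}" using subgroup.one_closed[OF sub] by blast
next
  fix a assume "a \<in> gi ` L"
  then obtain l where l: "l \<in> L" "a = gi l" by blast
  have lK: "l \<in> carrier K" using l Lsub by blast
  have "inv\<^bsub>G'\<^esub> a = gi (inv\<^bsub>K\<^esub> l)" using inv_G'[OF gA[OF lK]] l hg[OF lK] by simp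
  then show "inv\<^bsub>G'\<^esub> a \<in> gi ` L" using subgroup.m_inv_closed[OF sub l(1)] by simp
next
  fix a b assume "a \<in> gi ` L" "b \<in> gi ` L"
  then obtain l m where l: "l \<in> L" "a = gi l" and m: "m \<in> L" "b = gi m" by blast
  have "l \<in> carrier K" "m \<in> carrier K" using l m Lsub by blast+
  then have "a \<otimes>\<^bsub>G'\<^esub> b = gi (l \<otimes>\<^bsub>K\<^esub> m)" using l m by (simp add: G'_simps hg)
  then show "a \<otimes>\<^bsub>G'\<^esub> b \<in> gi ` L" using subgroup.m_closed[OF sub l(1) m(1)] by simp
qed

lemma coset_G': assumes a: "a \<in> A" shows "a <#\<^bsub>G'\<^esub> (gi ` L) = gi ` (h a <#\<^bsub>K\<^esub> L)"
proof -
  have "a <#\<^bsub>G'\<^esub> (gi ` L) = (\<Union>l\<in>L. {gi (h a \<otimes>\<^bsub>K\<^esub> h (gi l))})"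
    unfolding l_coset_def by (simp add: G'_simps)
  also have "\<dots> = (\<Union>l\<in>L. {gi (h a \<otimes>\<^bsub>K\<^esub> l)})" using Lsub hg by (auto intro!: SUP_cong)
  also have "\<dots> = gi ` (h a <#\<^bsub>K\<^esub> L)" unfolding l_coset_def by auto
  finally show ?thesis .
qed

lemma lcosets_G': "lcosets G' (gi ` L) = (image gi) ` lcosets K L"
proof
  show "lcosets G' (gi ` L) \<subseteq> (image gi) ` lcosets K L"
  proof
    fix c assume "c \<in> lcosets G' (gi ` L)"
    then obtain a where a: "a \<in> A" "c = a <#\<^bsub>G'\<^esub> (gi ` L)" unfolding lcosets_def by (auto simp: G'_simps)
    then have "c = gi ` (h a <#\<^bsub>K\<^esub> L)" using coset_G' by simp
    moreover have "h a <#\<^bsub>K\<^esub> L \<in> lcosets K L" unfolding lcosets_def using hK[OF a(1)] by blast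
    ultimately show "c \<in> (image gi) ` lcosets K L" by blast
  qed
next
  show "(image gi) ` lcosets K L \<subseteq> lcosets G' (gi ` L)"
  proof
    fix c assume "c \<in> (image gi) ` lcosets K L"
    then obtain s where s: "s \<in> carrier K" "c = gi ` (s <#\<^bsub>K\<^esub> L)" unfolding lcosets_def by blast
    then have "c = gi s <#\<^bsub>G'\<^esub> (gi ` L)" using coset_G'[OF gA[OF s(1)]] hg[OF s(1)] by simp
    then show "c \<in> lcosets G' (gi ` L)" unfolding lcosets_def using gA[OF s(1)] by (auto simp: G'_simps)
  qed
qed

lemma inj_img: "inj_on (image gi) (lcosets K L)"
proof -
  have "inj_on gi (carrier K)" using hb by (metis bij_betw_def bij_betw_inv_into)
  then have "inj_on (image gi) (Pow (carrier K))" by (rule inj_on_image_Pow)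
  moreover have "lcosets K L \<subseteq> Pow (carrier K)"
    unfolding lcosets_def using group.l_coset_subset_G[OF grp Lsub] by blast
  ultimately show ?thesis by (rule inj_on_subset)
qed

lemma transport_via:
  assumes via: "GH_frame_via K L X \<Phi> \<beta>" and finA: "finite A"
  shows "GH_frame_via G' (gi ` L) X \<Phi> (\<lambda>x. gi ` \<beta> x)"
proof -
  obtain \<rho> v where rep: "unitary_rep K \<rho>" and fixv: "\<forall>l\<in>L. \<rho> l *v v = v"
    and phi: "\<forall>x\<in>X. \<forall>g\<in>carrier K. \<beta> x = g <#\<^bsub>K\<^esub> L \<longrightarrow> \<Phi> x = \<rho> g *v v"
    and bij: "bij_betw \<beta> X (lcosets K L)"
    using via unfolding GH_frame_via_def by auto
  have b1: "bij_betw (image gi) (lcosets K L) (lcosets G' (gi ` L))"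
    unfolding lcosets_G' using inj_img by (rule inj_on_imp_bij_betw)
  have bij': "bij_betw (\<lambda>x. gi ` \<beta> x) X (lcosets G' (gi ` L))"
    using bij_betw_trans[OF bij b1] by (simp add: o_def)
  have rep': "unitary_rep G' (\<lambda>a. \<rho> (h a))"
    unfolding unitary_rep_def
  proof (intro conjI ballI)
    fix a assume "a \<in> carrier G'" then show "unitary_mat (\<rho> (h a))"
      using rep hK unfolding unitary_rep_def by (simp add: G'_simps)
  next
    fix a b assume "a \<in> carrier G'" "b \<in> carrier G'"
    then have a: "h a \<in> carrier K" and b: "h b \<in> carrier K" by (simp_all add: G'_simps hK)
    show "\<rho> (h (a \<otimes>\<^bsub>G'\<^esub> b)) = \<rho> (h a) ** \<rho> (h b)"
      using rep a b unfolding unitary_rep_def by (simp add: G'_simps hg monoid.m_closed[OF mon])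
  qed
  have fixv': "\<forall>l\<in>gi ` L. \<rho> (h l) *v v = v"
    using fixv Lsub hg by auto
  have phi': "\<forall>x\<in>X. \<forall>a\<in>carrier G'. gi ` \<beta> x = a <#\<^bsub>G'\<^esub> (gi ` L) \<longrightarrow> \<Phi> x = \<rho> (h a) *v v"
  proof (intro ballI impI)
    fix x a assume x: "x \<in> X" and a: "a \<in> carrier G'" and e: "gi ` \<beta> x = a <#\<^bsub>G'\<^esub> (gi ` L)"
    have aA: "a \<in> A" using a by (simp add: G'_simps)
    have "gi ` \<beta> x = gi ` (h a <#\<^bsub>K\<^esub> L)" using e coset_G'[OF aA] by simp
    moreover have "\<beta> x \<in> lcosets K L" by (rule bij_betw_apply[OF bij x])
    moreover have "h a <#\<^bsub>K\<^esub> L \<in> lcosets K L" unfolding lcosets_def using hK[OF aA] by blast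
    ultimately have "\<beta> x = h a <#\<^bsub>K\<^esub> L" by (rule inj_onD[OF inj_img])
    then show "\<Phi> x = \<rho> (h a) *v v" by (rule phi[rule_format, OF x hK[OF aA]])
  qed
  show ?thesis unfolding GH_frame_via_def
    apply (intro conjI group_G' subgroup_H' bij')
     apply (simp add: G'_simps finA)
    apply (rule exI[of _ "\<lambda>a. \<rho> (h a)"], rule exI[of _ v])
    using rep' fixv' phi' by (intro conjI)
qed

end

lemma homogeneous_from_via:
  assumes grp: "group K" and fin: "finite (carrier K)" and via: "GH_frame_via K L X \<Phi> \<beta>"
  shows "homogeneous_frame X \<Phi>"
proof -
  obtain h where hb: "bij_betw h {0..<card (carrier K)} (carrier K)"
    using ex_bij_betw_nat_finite[OF fin] by blast
  have sub: "subgroup L K" using via unfolding GH_frame_via_def by simp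
  have "GH_frame_via (G' K h {0..<card (carrier K)}) (inv_into {0..<card (carrier K)} h ` L) X \<Phi>
          (\<lambda>x. inv_into {0..<card (carrier K)} h ` \<beta> x)"
    by (rule transport_via[OF grp sub hb via]) simp
  then show ?thesis unfolding homogeneous_frame_def GH_frame_def by blast
qed



lemma unpack:
  assumes "GH_frame G H X \<Phi>"
  obtains \<beta> \<rho> v where "group G" "subgroup H G" "bij_betw \<beta> X (lcosets G H)" "unitary_rep G \<rho>"
    "\<forall>h\<in>H. \<rho> h *v v = v" "\<forall>x\<in>X. \<forall>g\<in>carrier G. \<beta> x = g <#\<^bsub>G\<^esub> H \<longrightarrow> \<Phi> x = \<rho> g *v v"
  using assms unfolding GH_frame_def GH_frame_via_def by auto

lemma trans_from_GH:
  assumes "GH_frame G H X \<Phi>" "finite X"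
  shows "\<forall>x\<in>X. \<forall>y\<in>X. \<exists>\<sigma>\<in>carrier (S X \<Phi>). \<sigma> x = y"
proof -
  obtain \<beta> \<rho> v where a: "group G" "subgroup H G" "bij_betw \<beta> X (lcosets G H)" "unitary_rep G \<rho>"
    "\<forall>h\<in>H. \<rho> h *v v = v" "\<forall>x\<in>X. \<forall>g\<in>carrier G. \<beta> x = g <#\<^bsub>G\<^esub> H \<longrightarrow> \<Phi> x = \<rho> g *v v"
    using unpack[OF assms(1)] by blast
  show ?thesis by (rule transitive[OF a assms(2)])
qed

lemma gelfand_from_GH:
  assumes "GH_frame G H X \<Phi>" "gelfand_pair G H" "is_frame X \<Phi>" "x0 \<in> X"
  shows "gelfand_pair (S X \<Phi>) (stab_frame X \<Phi> x0)"
proof -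
  have fin: "finite X" using assms(3) is_frame_def by auto
  obtain \<beta> \<rho> v where a: "group G" "subgroup H G" "bij_betw \<beta> X (lcosets G H)" "unitary_rep G \<rho>"
    "\<forall>h\<in>H. \<rho> h *v v = v" "\<forall>x\<in>X. \<forall>g\<in>carrier G. \<beta> x = g <#\<^bsub>G\<^esub> H \<longrightarrow> \<Phi> x = \<rho> g *v v"
    using unpack[OF assms(1)] by blast
  show ?thesis by (rule gelfand_transfer[OF a fin assms(3,4,2)])
qed

theorem theorem3p5:
  fixes X :: "'x set" and \<Phi> :: "'x \<Rightarrow> complex^'n" and x0 :: 'x
  assumes frame: "is_frame X \<Phi>" and x0: "x0 \<in> X"
  shows
    "(homogeneous_frame X \<Phi> \<longleftrightarrow>
        (\<forall>x\<in>X. \<forall>y\<in>X. \<exists>\<sigma>\<in>carrier (sym_group_frame X \<Phi>). \<sigma> x = y))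
     \<and> (\<forall>(G :: ('g, 'b) monoid_scheme) H. GH_frame G H X \<Phi> \<longrightarrow>
          (\<forall>x\<in>X. \<forall>y\<in>X. \<exists>\<sigma>\<in>carrier (sym_group_frame X \<Phi>). \<sigma> x = y))
     \<and> ((\<forall>x\<in>X. \<forall>y\<in>X. \<exists>\<sigma>\<in>carrier (sym_group_frame X \<Phi>). \<sigma> x = y) \<longrightarrow>
          (\<exists>\<beta>. (\<forall>x\<in>X. \<forall>\<sigma>\<in>carrier (sym_group_frame X \<Phi>). \<sigma> x0 = x \<longrightarrow>
                    \<beta> x = \<sigma> <#\<^bsub>sym_group_frame X \<Phi>\<^esub> stab_frame X \<Phi> x0)
               \<and> GH_frame_via (sym_group_frame X \<Phi>) (stab_frame X \<Phi> x0) X \<Phi> \<beta>))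
     \<and> (\<forall>(G :: ('g, 'b) monoid_scheme) H.
          GH_frame G H X \<Phi> \<and> gelfand_pair G H \<longrightarrow>
          gelfand_pair (sym_group_frame X \<Phi>) (stab_frame X \<Phi> x0))"
proof -
  have fin: "finite X" using frame is_frame_def by auto
  have p3: "(\<forall>x\<in>X. \<forall>y\<in>X. \<exists>\<sigma>\<in>carrier (sym_group_frame X \<Phi>). \<sigma> x = y) \<longrightarrow>
          (\<exists>\<beta>. (\<forall>x\<in>X. \<forall>\<sigma>\<in>carrier (sym_group_frame X \<Phi>). \<sigma> x0 = x \<longrightarrow>
                    \<beta> x = \<sigma> <#\<^bsub>sym_group_frame X \<Phi>\<^esub> stab_frame X \<Phi> x0)
               \<and> GH_frame_via (sym_group_frame X \<Phi>) (stab_frame X \<Phi> x0) X \<Phi> \<beta>)"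
  proof
    assume tr: "\<forall>x\<in>X. \<forall>y\<in>X. \<exists>\<sigma>\<in>carrier (sym_group_frame X \<Phi>). \<sigma> x = y"
    show "\<exists>\<beta>. (\<forall>x\<in>X. \<forall>\<sigma>\<in>carrier (sym_group_frame X \<Phi>). \<sigma> x0 = x \<longrightarrow>
                    \<beta> x = \<sigma> <#\<^bsub>sym_group_frame X \<Phi>\<^esub> stab_frame X \<Phi> x0)
               \<and> GH_frame_via (sym_group_frame X \<Phi>) (stab_frame X \<Phi> x0) X \<Phi> \<beta>"
      by (rule exI[of _ "betaS X \<Phi> x0"]) (rule part3[OF frame x0 tr])
  qed
  have p1: "homogeneous_frame X \<Phi> \<longleftrightarrow> (\<forall>x\<in>X. \<forall>y\<in>X. \<exists>\<sigma>\<in>carrier (sym_group_frame X \<Phi>). \<sigma> x = y)"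
  proof
    assume "homogeneous_frame X \<Phi>"
    then obtain G :: "nat monoid" and H where "GH_frame G H X \<Phi>"
      unfolding homogeneous_frame_def by blast
    then show "\<forall>x\<in>X. \<forall>y\<in>X. \<exists>\<sigma>\<in>carrier (sym_group_frame X \<Phi>). \<sigma> x = y"
      by (rule trans_from_GH[OF _ fin])
  next
    assume tr: "\<forall>x\<in>X. \<forall>y\<in>X. \<exists>\<sigma>\<in>carrier (sym_group_frame X \<Phi>). \<sigma> x = y"
    have "GH_frame_via (sym_group_frame X \<Phi>) (stab_frame X \<Phi> x0) X \<Phi> (betaS X \<Phi> x0)"
      using part3[OF frame x0 tr] by (rule conjunct2)
    then show "homogeneous_frame X \<Phi>"
      by (rule homogeneous_from_via[OF group_S[OF fin] finite_S[OF fin]])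
  qed
  have p2: "\<forall>(G :: ('g, 'b) monoid_scheme) H. GH_frame G H X \<Phi> \<longrightarrow>
          (\<forall>x\<in>X. \<forall>y\<in>X. \<exists>\<sigma>\<in>carrier (sym_group_frame X \<Phi>). \<sigma> x = y)"
    by (intro allI impI, rule trans_from_GH[OF _ fin])
  have p4: "\<forall>(G :: ('g, 'b) monoid_scheme) H.
          GH_frame G H X \<Phi> \<and> gelfand_pair G H \<longrightarrow>
          gelfand_pair (sym_group_frame X \<Phi>) (stab_frame X \<Phi> x0)"
    by (intro allI impI, erule conjE, rule gelfand_from_GH[OF _ _ frame x0])
  show ?thesis by (intro conjI p1 p2 p3 p4)
qed


end
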